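(* Let $d\ge4$, let $F$ be a field with $\operatorname{char}F=0$ or $\operatorname{char}F>d$, and let $K/F$ be a degree $d$ extension whose Galois closure $L$ has $\mathrm{Gal}(L/F)\cong S_d$. Let $1,\alpha_1,\dots,\alpha_{d-1}$ be an $F$-basis of $K$ with $\mathrm{Tr}_{K/F}(\alpha_i)=0$ for $i\ge1$, and let $1,\alpha_1^*,\dots,\alpha_{d-1}^*$ be the dual basis with respect to the trace form $(x,y)\mapsto\mathrm{Tr}_{K/F}(xy)$. Let $Q^1,\dots,Q^{\beta}\in F[x_1,\dots,x_{d-1}]$ be the quadratic forms defined below. Then for every $\ell$, \[Q^\ell(\alpha_1^*,\dots,\alpha_{d-1}^* )=0\quad\text{in }K,\] and consequently $Q^\ell$ vanishes at each of the $d$ points $[\sigma_m(\alpha_1^* ):\dots:\sigma_m(\alpha_{d-1}^* )]\in\mathbf{P}^{d-2}(L)$, $m=1,\dots,d$.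
   Context: Let $\sigma_1=\mathrm{id},\sigma_2,\dots,\sigma_d$ be the $F$-embeddings $K\hookrightarrow L$, write $\alpha^{(m)}=\sigma_m(\alpha)$ for $\alpha\in K$, and identify $\mathrm{Gal}(L/F)$ with $S_d=\mathrm{Sym}\{1,\dots,d\}$ via its action on the indices of the $\alpha^{(m)}$ for a primitive element $\alpha$ of $K$. Let $V_1=\mathrm{Span}_F\{\alpha_1,\dots,\alpha_{d-1}\}$ (the trace-zero elements of $K$). View $L$ as a representation of $S_d$ over $F$; let $W_{(d-2,2)}\subseteq L$ be its isotypic component of the Specht module $V_{(d-2,2)}$, and $V_2=W_{(d-2,2)}\cap L^{S_2\times S_{d-2}}$, where $S_2\times S_{d-2}$ is the stabilizer of $\{1,2\}$; $V_2$ has $F$-dimension $\beta=d(d-3)/2$. Define the quadratic map $q\colon V_1\to L$ by \[q(\alpha)=\sum_{\tau\in S_{d-2}}\big(\alpha^{(1)}-\alpha^{(\tau(3))}\big)\big(\alpha^{(2)}-\alpha^{(\tau(4))}\big),\] with $S_{d-2}$ the permutations of $\{3,\dots,d\}$; its image lies in $V_2$. Fix an $F$-basis $\omega_1,\dots,\omega_\beta$ of $V_2$ and define the quadratic forms $Q^\ell$ by $q\big(\sum_j a_j\alpha_j\big)=\sum_{\ell=1}^{\beta}Q^\ell(a_1,\dots,a_{d-1})\,\omega_\ell$ for all $a_j\in F$. *)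

theory Defs
  imports Main "HOL-Combinatorics.Permutations"
begin

text \<open>Conventions. The Galois closure L is the whole field type 'a; the base field F and the
degree-d field K are subsets of it.  Embeddings and indices are 1-based as in the paper.\<close>

definition is_subfield :: "'a::field set \<Rightarrow> bool" where
  "is_subfield S \<longleftrightarrow> 0 \<in> S \<and> 1 \<in> S \<and> (\<forall>x\<in>S. \<forall>y\<in>S. x + y \<in> S \<and> x * y \<in> S)
     \<and> (\<forall>x\<in>S. - x \<in> S \<and> inverse x \<in> S)"

definition gen_field :: "'a::field set \<Rightarrow> 'a set" where
  "gen_field S = \<Inter> {T. is_subfield T \<and> S \<subseteq> T}"

definition is_basis :: "'a::field set \<Rightarrow> 'a set \<Rightarrow> 'i set \<Rightarrow> ('i \<Rightarrow> 'a) \<Rightarrow> bool" where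
  "is_basis F V I b \<longleftrightarrow> finite I \<and> b ` I \<subseteq> V
     \<and> (\<forall>c. (\<forall>i\<in>I. c i \<in> F) \<longrightarrow> (\<Sum>i\<in>I. c i * b i) = 0 \<longrightarrow> (\<forall>i\<in>I. c i = 0))
     \<and> (\<forall>x\<in>V. \<exists>c. (\<forall>i\<in>I. c i \<in> F) \<and> x = (\<Sum>i\<in>I. c i * b i))"

definition fspan :: "'a::field set \<Rightarrow> 'a set \<Rightarrow> 'a set" where
  "fspan F S = {x. \<exists>(n::nat) c v. (\<forall>i<n. c i \<in> F \<and> v i \<in> S) \<and> x = (\<Sum>i<n. c i * v i)}"

definition coord :: "'a::field set \<Rightarrow> 'i set \<Rightarrow> ('i \<Rightarrow> 'a) \<Rightarrow> 'a \<Rightarrow> 'i \<Rightarrow> 'a" where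
  "coord F I b y = (SOME c. (\<forall>i\<in>I. c i \<in> F) \<and> y = (\<Sum>i\<in>I. c i * b i))"

text \<open>Trace Tr_{K/F}(x): trace of the F-linear map "multiplication by x" on K, computed in
(some) F-basis of K.\<close>
definition trace :: "'a::field set \<Rightarrow> 'a set \<Rightarrow> 'a \<Rightarrow> 'a" where
  "trace F K x = (case (SOME (n, b). is_basis F K {..<n::nat} b) of
      (n, b) \<Rightarrow> (\<Sum>i<n. coord F {..<n} b (x * b i) i))"

definition is_embedding :: "'a::field set \<Rightarrow> 'a set \<Rightarrow> ('a \<Rightarrow> 'a) \<Rightarrow> bool" where
  "is_embedding F K s \<longleftrightarrow> inj_on s K \<and> (\<forall>x\<in>F. s x = x) \<and> s 1 = 1
     \<and> (\<forall>x\<in>K. \<forall>y\<in>K. s (x + y) = s x + s y \<and> s (x * y) = s x * s y)"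

definition gal_auto :: "'a::field set \<Rightarrow> ('a \<Rightarrow> 'a) \<Rightarrow> bool" where
  "gal_auto F g \<longleftrightarrow> bij g \<and> g 1 = 1 \<and> (\<forall>x y. g (x + y) = g x + g y \<and> g (x * y) = g x * g y)
     \<and> (\<forall>x\<in>F. g x = x)"

definition gal_perm :: "'a::field set \<Rightarrow> (nat \<Rightarrow> 'a \<Rightarrow> 'a) \<Rightarrow> nat \<Rightarrow> ('a \<Rightarrow> 'a) \<Rightarrow> (nat \<Rightarrow> nat) \<Rightarrow> bool" where
  "gal_perm K \<sigma> d g \<pi> \<longleftrightarrow> \<pi> permutes {1..d} \<and> (\<forall>m\<in>{1..d}. \<forall>x\<in>K. g (\<sigma> m x) = \<sigma> (\<pi> m) x)"

text \<open>Permutation module on 2-subsets of {1..d} (tabloids of shape (d-2,2)), as F-valued functions.\<close>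
definition tab_ind :: "nat set \<Rightarrow> nat set \<Rightarrow> 'a::field" where
  "tab_ind S T = (if T = S then 1 else 0)"

text \<open>Polytabloid of the tableau with first row c e ..., second row a b (columns {c,a}, {e,b}).\<close>
definition polytabloid :: "nat \<Rightarrow> nat \<Rightarrow> nat \<Rightarrow> nat \<Rightarrow> nat set \<Rightarrow> 'a::field" where
  "polytabloid a b c e = (\<lambda>T. tab_ind {a,b} T - tab_ind {c,b} T - tab_ind {a,e} T + tab_ind {c,e} T)"

definition specht :: "'a::field set \<Rightarrow> nat \<Rightarrow> (nat set \<Rightarrow> 'a) set" where
  "specht F d = {v. \<exists>(n::nat) k a b c e. (\<forall>i<n. k i \<in> F \<and> distinct [a i, b i, c i, e i]
        \<and> {a i, b i, c i, e i} \<subseteq> {1..d})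
      \<and> v = (\<lambda>T. \<Sum>i<n. k i * (polytabloid (a i) (b i) (c i) (e i) T :: 'a))}"

definition perm_act :: "(nat \<Rightarrow> nat) \<Rightarrow> (nat set \<Rightarrow> 'a) \<Rightarrow> (nat set \<Rightarrow> 'a)" where
  "perm_act \<pi> v = (\<lambda>T. v (inv \<pi> ` T))"

definition specht_hom :: "'a::field set \<Rightarrow> 'a set \<Rightarrow> (nat \<Rightarrow> 'a \<Rightarrow> 'a) \<Rightarrow> nat \<Rightarrow> ((nat set \<Rightarrow> 'a) \<Rightarrow> 'a) \<Rightarrow> bool" where
  "specht_hom F K \<sigma> d f \<longleftrightarrow>
     (\<forall>u\<in>specht F d. \<forall>v\<in>specht F d. f (\<lambda>T. u T + v T) = f u + f v)
   \<and> (\<forall>k\<in>F. \<forall>v\<in>specht F d. f (\<lambda>T. k * v T) = k * f v)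
   \<and> (\<forall>g \<pi>. gal_auto F g \<and> gal_perm K \<sigma> d g \<pi> \<longrightarrow> (\<forall>v\<in>specht F d. f (perm_act \<pi> v) = g (f v)))"

text \<open>Isotypic component W_{(d-2,2)} of L: sum of the images of all S_d-homomorphisms
V_{(d-2,2)} \<rightarrow> L (= sum of all subrepresentations isomorphic to V_{(d-2,2)}).\<close>
definition isotypic :: "'a::field set \<Rightarrow> 'a set \<Rightarrow> (nat \<Rightarrow> 'a \<Rightarrow> 'a) \<Rightarrow> nat \<Rightarrow> 'a set" where
  "isotypic F K \<sigma> d = fspan F (\<Union> {f ` specht F d | f. specht_hom F K \<sigma> d f})"

definition fixed_S2 :: "'a::field set \<Rightarrow> 'a set \<Rightarrow> (nat \<Rightarrow> 'a \<Rightarrow> 'a) \<Rightarrow> nat \<Rightarrow> 'a set" where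
  "fixed_S2 F K \<sigma> d = {y. \<forall>g \<pi>. gal_auto F g \<and> gal_perm K \<sigma> d g \<pi> \<and> \<pi> ` {1,2} = {1,2} \<longrightarrow> g y = y}"

definition V2 :: "'a::field set \<Rightarrow> 'a set \<Rightarrow> (nat \<Rightarrow> 'a \<Rightarrow> 'a) \<Rightarrow> nat \<Rightarrow> 'a set" where
  "V2 F K \<sigma> d = isotypic F K \<sigma> d \<inter> fixed_S2 F K \<sigma> d"

definition qmap :: "(nat \<Rightarrow> 'a \<Rightarrow> 'a::field) \<Rightarrow> nat \<Rightarrow> 'a \<Rightarrow> 'a" where
  "qmap \<sigma> d x = (\<Sum>\<tau>\<in>{\<tau>. \<tau> permutes {3..d}}.
      (\<sigma> 1 x - \<sigma> (\<tau> 3) x) * (\<sigma> 2 x - \<sigma> (\<tau> 4) x))"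

definition qform :: "nat \<Rightarrow> (nat \<Rightarrow> nat \<Rightarrow> 'a::field) \<Rightarrow> (nat \<Rightarrow> 'a) \<Rightarrow> 'a" where
  "qform n C x = (\<Sum>i\<in>{1..n}. \<Sum>j\<in>{1..n}. C i j * x i * x j)"

end

theory Submission
  imports Defs "Jordan_Normal_Form.Determinant"
begin

lemma subf_sum: "is_subfield S \<Longrightarrow> (\<And>i. i\<in>I \<Longrightarrow> f i \<in> S) \<Longrightarrow> sum f I \<in> S"
  by (induction I rule: infinite_finite_induct) (auto simp: is_subfield_def)

lemma subf_of_nat: "is_subfield S \<Longrightarrow> of_nat n \<in> S"
  by (induction n) (auto simp: is_subfield_def)

lemma subf_mult: "is_subfield S \<Longrightarrow> x \<in> S \<Longrightarrow> y \<in> S \<Longrightarrow> x * y \<in> S"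
  by (auto simp: is_subfield_def)
lemma subf_add: "is_subfield S \<Longrightarrow> x \<in> S \<Longrightarrow> y \<in> S \<Longrightarrow> x + y \<in> S"
  by (auto simp: is_subfield_def)
lemma subf_diff: "is_subfield S \<Longrightarrow> x \<in> S \<Longrightarrow> y \<in> S \<Longrightarrow> x - y \<in> S"
  unfolding is_subfield_def by (metis diff_conv_add_uminus)
lemma subf_inv: "is_subfield S \<Longrightarrow> x \<in> S \<Longrightarrow> inverse x \<in> S"
  by (auto simp: is_subfield_def)
lemma subf_01: "is_subfield S \<Longrightarrow> 0 \<in> S" "is_subfield S \<Longrightarrow> 1 \<in> S"
  by (auto simp: is_subfield_def)

lemma emb_0: "is_embedding F K s \<Longrightarrow> is_subfield K \<Longrightarrow> s 0 = 0"
  unfolding is_embedding_def is_subfield_def by (metis add_cancel_right_right add_0)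

lemma emb_add: "is_embedding F K s \<Longrightarrow> x \<in> K \<Longrightarrow> y \<in> K \<Longrightarrow> s (x + y) = s x + s y"
  unfolding is_embedding_def by blast
lemma emb_mult: "is_embedding F K s \<Longrightarrow> x \<in> K \<Longrightarrow> y \<in> K \<Longrightarrow> s (x * y) = s x * s y"
  unfolding is_embedding_def by blast

lemma emb_uminus: "is_embedding F K s \<Longrightarrow> is_subfield K \<Longrightarrow> x \<in> K \<Longrightarrow> s (- x) = - s x"
proof -
  assume E: "is_embedding F K s" and S: "is_subfield K" and x: "x \<in> K"
  have mx: "- x \<in> K" using S x by (auto simp: is_subfield_def)
  have "s (x + - x) = s x + s (- x)" using emb_add[OF E x mx] .
  moreover have "s (x + - x) = 0" using emb_0[OF E S] by simp
  ultimately show ?thesis by (metis add_eq_0_iff)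
qed

lemma emb_diff: "is_embedding F K s \<Longrightarrow> is_subfield K \<Longrightarrow> x \<in> K \<Longrightarrow> y \<in> K \<Longrightarrow> s (x - y) = s x - s y"
proof -
  assume E: "is_embedding F K s" and S: "is_subfield K" and x: "x \<in> K" and y: "y \<in> K"
  have my: "- y \<in> K" using S y by (auto simp: is_subfield_def)
  show ?thesis using emb_add[OF E x my] emb_uminus[OF E S y] by simp
qed

lemma emb_sum: "is_embedding F K s \<Longrightarrow> is_subfield K \<Longrightarrow> (\<And>i. i\<in>I \<Longrightarrow> f i \<in> K) \<Longrightarrow> s (sum f I) = (\<Sum>i\<in>I. s (f i))"
proof (induction I rule: infinite_finite_induct)
  case (infinite A) then show ?case by (simp add: emb_0)
next
  case empty then show ?case by (simp add: emb_0)
next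
  case (insert x F')
  have "sum f F' \<in> K" using insert subf_sum by blast
  then show ?case using insert emb_add[of F K s "f x" "sum f F'"] by simp
qed

lemma emb_Fmult: "is_embedding F K s \<Longrightarrow> F \<subseteq> K \<Longrightarrow> c \<in> F \<Longrightarrow> x \<in> K \<Longrightarrow> s (c * x) = c * s x"
  unfolding is_embedding_def by (metis subsetD)

lemma dedekind:
  assumes SK: "is_subfield K"
    and E: "\<forall>m\<in>M0. is_embedding F K (\<tau> m)"
    and D: "\<forall>m\<in>M0. \<forall>m'\<in>M0. m \<noteq> m' \<longrightarrow> (\<exists>x\<in>K. \<tau> m x \<noteq> \<tau> m' x)"
  shows "finite M \<Longrightarrow> M \<subseteq> M0 \<Longrightarrow> \<forall>c. (\<forall>y\<in>K. (\<Sum>m\<in>M. c m * \<tau> m y) = 0) \<longrightarrow> (\<forall>m\<in>M. c m = 0)"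
proof (induction M rule: finite_induct)
  case empty thus ?case by simp
next
  case (insert a M)
  show ?case
  proof (intro allI impI)
    fix c assume H: "\<forall>y\<in>K. (\<Sum>m\<in>insert a M. c m * \<tau> m y) = 0"
    have H': "\<forall>y\<in>K. c a * \<tau> a y + (\<Sum>m\<in>M. c m * \<tau> m y) = 0" using H insert.hyps by simp
    have Z: "\<forall>m\<in>M. c m * (\<tau> m z - \<tau> a z) = 0" if z: "z\<in>K" for z
    proof -
      have "\<forall>y\<in>K. (\<Sum>m\<in>M. (c m * (\<tau> m z - \<tau> a z)) * \<tau> m y) = 0"
      proof
        fix y assume y: "y\<in>K"
        have zy: "z*y \<in> K" using SK z y by (auto simp: is_subfield_def)
        have e1: "(\<Sum>m\<in>M. c m * \<tau> m (z*y)) = - (c a * \<tau> a (z*y))" using H' zy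
          by (simp add: eq_neg_iff_add_eq_0 add.commute)
        have e2: "(\<Sum>m\<in>M. c m * \<tau> m y) = - (c a * \<tau> a y)" using H' y
          by (simp add: eq_neg_iff_add_eq_0 add.commute)
        have mul: "\<forall>m\<in>insert a M. \<tau> m (z*y) = \<tau> m z * \<tau> m y"
          using E insert.prems z y by (auto simp: is_embedding_def)
        have "(\<Sum>m\<in>M. (c m * (\<tau> m z - \<tau> a z)) * \<tau> m y)
            = (\<Sum>m\<in>M. c m * \<tau> m (z*y) - \<tau> a z * (c m * \<tau> m y))"
          by (rule sum.cong) (use mul in \<open>auto simp: algebra_simps\<close>)
        also have "\<dots> = (\<Sum>m\<in>M. c m * \<tau> m (z*y)) - \<tau> a z * (\<Sum>m\<in>M. c m * \<tau> m y)"
          by (simp add: sum_subtractf sum_distrib_left)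
        also have "\<dots> = - (c a * (\<tau> a z * \<tau> a y)) + \<tau> a z * (c a * \<tau> a y)"
          using e1 e2 mul by simp
        also have "\<dots> = 0" by (simp add: algebra_simps)
        finally show "(\<Sum>m\<in>M. (c m * (\<tau> m z - \<tau> a z)) * \<tau> m y) = 0" .
      qed
      moreover have IH: "\<forall>c. (\<forall>y\<in>K. (\<Sum>m\<in>M. c m * \<tau> m y) = 0) \<longrightarrow> (\<forall>m\<in>M. c m = 0)"
        using insert.IH insert.prems by simp
      ultimately show ?thesis using IH[rule_format, of "\<lambda>m. c m * (\<tau> m z - \<tau> a z)"] by simp
    qed
    have cM: "\<forall>m\<in>M. c m = 0"
    proof
      fix m assume m: "m \<in> M"
      have "m \<noteq> a" using m insert.hyps by auto
      then obtain z where z: "z\<in>K" "\<tau> m z \<noteq> \<tau> a z" using D insert.prems m by blast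
      show "c m = 0" using Z[OF z(1)] m z(2) by auto
    qed
    have "c a * \<tau> a 1 = 0" using H' SK cM by (auto simp: is_subfield_def)
    moreover have "\<tau> a 1 = 1" using E insert.prems by (auto simp: is_embedding_def)
    ultimately show "\<forall>m\<in>insert a M. c m = 0" using cM by simp
  qed
qed

lemma inv_exists:
  fixes A :: "nat \<Rightarrow> nat \<Rightarrow> 'a::field"
  assumes indep: "\<forall>v. (\<forall>i<n. (\<Sum>m<n. v m * A m i) = 0) \<longrightarrow> (\<forall>m<n. v m = 0)"
  shows "\<exists>R. (\<forall>i<n. \<forall>j<n. (\<Sum>k<n. A i k * R k j) = (if i = j then 1 else 0))
           \<and> (\<forall>i<n. \<forall>j<n. (\<Sum>k<n. R i k * A k j) = (if i = j then 1 else 0))"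
proof -
  define M where "M = mat n n (\<lambda>(i,j). A i j)"
  have Mc: "M \<in> carrier_mat n n" by (simp add: M_def)
  have "det M \<noteq> 0"
  proof
    assume "det M = 0"
    hence "det (transpose_mat M) = 0" using det_transpose Mc by metis
    moreover have Tc: "transpose_mat M \<in> carrier_mat n n" using Mc by simp
    ultimately obtain v where v: "v \<in> carrier_vec n" "v \<noteq> 0\<^sub>v n" "transpose_mat M *\<^sub>v v = 0\<^sub>v n"
      using det_0_iff_vec_prod_zero_field[OF Tc] by auto
    have "\<forall>i<n. (\<Sum>m<n. v $ m * A m i) = 0"
    proof (intro allI impI)
      fix i assume i: "i<n"
      have "(transpose_mat M *\<^sub>v v) $ i = 0" using v(3) i by simp
      thus "(\<Sum>m<n. v $ m * A m i) = 0" using i v(1)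
        by (simp add: M_def scalar_prod_def atLeast0LessThan mult.commute)
    qed
    hence "\<forall>m<n. v $ m = 0" using indep by blast
    hence "v = 0\<^sub>v n" using v(1) by (intro eq_vecI) auto
    thus False using v(2) by simp
  qed
  from det_non_zero_imp_unit[OF Mc this, of undefined]
  obtain B where B: "B \<in> carrier_mat n n" "B * M = 1\<^sub>m n" "M * B = 1\<^sub>m n"
    unfolding Units_def by (auto simp: ring_mat_simps)
  show ?thesis
  proof (intro exI[of _ "\<lambda>i j. B $$ (i,j)"] conjI allI impI)
    fix i j assume i: "i<n" and j: "j<n"
    have "(M * B) $$ (i,j) = (if i = j then 1 else 0)" using B(3) i j by simp
    thus "(\<Sum>k<n. A i k * B $$ (k, j)) = (if i = j then 1 else 0)" using i j B(1)
      by (simp add: M_def scalar_prod_def atLeast0LessThan)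
    have "(B * M) $$ (i,j) = (if i = j then 1 else 0)" using B(2) i j by simp
    thus "(\<Sum>k<n. B $$ (i, k) * A k j) = (if i = j then 1 else 0)" using i j B(1)
      by (simp add: M_def scalar_prod_def atLeast0LessThan)
  qed
qed


lemma sum_swap_mult:
  "(\<Sum>m\<in>M. f m * (\<Sum>l\<in>L. g l * h m l)) = (\<Sum>l\<in>L. g l * (\<Sum>m\<in>M. f m * (h m l :: 'a::comm_semiring_0)))"
proof -
  have "(\<Sum>m\<in>M. f m * (\<Sum>l\<in>L. g l * h m l)) = (\<Sum>m\<in>M. \<Sum>l\<in>L. g l * (f m * h m l))"
    by (simp add: sum_distrib_left mult.left_commute)
  also have "\<dots> = (\<Sum>l\<in>L. \<Sum>m\<in>M. g l * (f m * h m l))" by (rule sum.swap)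
  also have "\<dots> = (\<Sum>l\<in>L. g l * (\<Sum>m\<in>M. f m * h m l))" by (simp add: sum_distrib_left)
  finally show ?thesis .
qed

lemma sum_swap3:
  "(\<Sum>a\<in>A. \<Sum>b\<in>B. \<Sum>c\<in>C. f a b c) = (\<Sum>b\<in>B. \<Sum>c\<in>C. \<Sum>a\<in>A. f a b c)"
proof -
  have "(\<Sum>a\<in>A. \<Sum>b\<in>B. \<Sum>c\<in>C. f a b c) = (\<Sum>b\<in>B. \<Sum>a\<in>A. \<Sum>c\<in>C. f a b c)" by (rule sum.swap)
  also have "\<dots> = (\<Sum>b\<in>B. \<Sum>c\<in>C. \<Sum>a\<in>A. f a b c)" by (rule sum.cong[OF refl], rule sum.swap)
  finally show ?thesis .
qed

lemma delta_sum: "k \<in> A \<Longrightarrow> finite A \<Longrightarrow> (\<Sum>j\<in>A. f j * (if j = k then 1 else 0)) = (f k :: 'a::comm_ring_1)"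
  by (simp add: if_distrib cong: if_cong)

lemma delta_sum_l: "k \<in> A \<Longrightarrow> finite A \<Longrightarrow> (\<Sum>j\<in>A. (if j = k then 1 else 0) * f j) = (f k :: 'a::comm_ring_1)"
proof -
  assume "k \<in> A" "finite A"
  have "(\<Sum>j\<in>A. (if j = k then 1 else 0) * f j) = (\<Sum>j\<in>A. if j = k then f j else 0)"
    by (rule sum.cong) auto
  thus ?thesis using \<open>k \<in> A\<close> \<open>finite A\<close> by simp
qed

lemma delta_sum': "k \<in> A \<Longrightarrow> finite A \<Longrightarrow> (\<Sum>j\<in>A. f j * (if k = j then 1 else 0)) = (f k :: 'a::comm_ring_1)"
  by (simp add: if_distrib cong: if_cong)

locale galsetup =
  fixes F K :: "'a::field set" and d :: nat and \<sigma> :: "nat \<Rightarrow> 'a \<Rightarrow> 'a" and \<alpha> :: "nat \<Rightarrow> 'a"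
  assumes d2: "d \<ge> 2" and charD: "(of_nat d :: 'a) \<noteq> 0"
    and subF: "is_subfield F" and subK: "is_subfield K" and FK: "F \<subseteq> K"
    and basis: "is_basis F K {0..<d} (\<lambda>i. if i = 0 then 1 else \<alpha> i)"
    and emb: "\<forall>m\<in>{1..d}. is_embedding F K (\<sigma> m)"
    and emb_dist: "\<forall>m\<in>{1..d}. \<forall>m'\<in>{1..d}. m \<noteq> m' \<longrightarrow> (\<exists>x\<in>K. \<sigma> m x \<noteq> \<sigma> m' x)"
begin

definition "\<beta> i = (if i = 0 then 1 else \<alpha> i)"
definition "sg m = \<sigma> (Suc m)"
definition "A m i = sg m (\<beta> i)"

lemma basis': "is_basis F K {..<d} \<beta>"
  using basis by (simp add: \<beta>_def[abs_def] atLeast0LessThan)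

lemma \<beta>K: "i < d \<Longrightarrow> \<beta> i \<in> K"
  using basis' by (auto simp: is_basis_def)

lemma embs: "m < d \<Longrightarrow> is_embedding F K (sg m)"
  using emb by (auto simp: sg_def)

definition "c\<beta> y = coord F {..<d} \<beta> y"

lemma c\<beta>: assumes "y \<in> K" shows "(\<forall>i\<in>{..<d}. c\<beta> y i \<in> F) \<and> y = (\<Sum>i<d. c\<beta> y i * \<beta> i)"
proof -
  have "\<exists>c. (\<forall>i\<in>{..<d}. c i \<in> F) \<and> y = (\<Sum>i<d. c i * \<beta> i)" using basis' assms by (auto simp: is_basis_def)
  thus ?thesis unfolding c\<beta>_def coord_def by (rule someI_ex)
qed

lemma c\<beta>F: "y \<in> K \<Longrightarrow> i < d \<Longrightarrow> c\<beta> y i \<in> F" using c\<beta> by blast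

lemma sg_expand: assumes "y \<in> K" "m < d" shows "sg m y = (\<Sum>i<d. c\<beta> y i * A m i)"
proof -
  have "sg m y = sg m (\<Sum>i<d. c\<beta> y i * \<beta> i)" using c\<beta>[OF assms(1)] by metis
  also have "\<dots> = (\<Sum>i<d. sg m (c\<beta> y i * \<beta> i))"
    by (rule emb_sum[OF embs[OF assms(2)] subK]) (use c\<beta>F[OF assms(1)] \<beta>K FK subK in \<open>auto intro: subf_mult\<close>)
  also have "\<dots> = (\<Sum>i<d. c\<beta> y i * A m i)"
    by (rule sum.cong[OF refl]) (use emb_Fmult[OF embs[OF assms(2)] FK] c\<beta>F[OF assms(1)] \<beta>K in \<open>auto simp: A_def\<close>)
  finally show ?thesis .
qed

lemma indepA: "\<forall>v. (\<forall>i<d. (\<Sum>m<d. v m * A m i) = 0) \<longrightarrow> (\<forall>m<d. v m = 0)"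
proof (rule allI, rule impI)
  fix v assume H: "\<forall>i<d. (\<Sum>m<d. v m * A m i) = 0"
  have "\<forall>y\<in>K. (\<Sum>m\<in>{..<d}. v m * sg m y) = 0"
  proof
    fix y assume y: "y \<in> K"
    have "(\<Sum>m<d. v m * sg m y) = (\<Sum>m<d. v m * (\<Sum>i<d. c\<beta> y i * A m i))"
      using sg_expand[OF y] by simp
    also have "\<dots> = (\<Sum>i<d. c\<beta> y i * (\<Sum>m<d. v m * A m i))" by (rule sum_swap_mult)
    also have "\<dots> = 0" using H by simp
    finally show "(\<Sum>m\<in>{..<d}. v m * sg m y) = 0" .
  qed
  moreover have E: "\<forall>m\<in>{..<d}. is_embedding F K (sg m)" using embs by blast
  moreover have D: "\<forall>m\<in>{..<d}. \<forall>m'\<in>{..<d}. m \<noteq> m' \<longrightarrow> (\<exists>x\<in>K. sg m x \<noteq> sg m' x)"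
    using emb_dist by (auto simp: sg_def)
  ultimately show "\<forall>m<d. v m = 0"
  proof -
    have "\<forall>c. (\<forall>y\<in>K. (\<Sum>m\<in>{..<d}. c m * sg m y) = 0) \<longrightarrow> (\<forall>m\<in>{..<d}. c m = 0)"
      using dedekind[OF subK E D, of "{..<d}"] by simp
    thus ?thesis using \<open>\<forall>y\<in>K. (\<Sum>m\<in>{..<d}. v m * sg m y) = 0\<close> by blast
  qed
qed

definition "R = (SOME R. (\<forall>i<d. \<forall>j<d. (\<Sum>k<d. A i k * R k j) = (if i = j then 1 else 0))
           \<and> (\<forall>i<d. \<forall>j<d. (\<Sum>k<d. R i k * A k j) = (if i = j then 1 else 0)))"

lemma R: "(\<forall>i<d. \<forall>j<d. (\<Sum>k<d. A i k * R k j) = (if i = j then 1 else 0))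
           \<and> (\<forall>i<d. \<forall>j<d. (\<Sum>k<d. R i k * A k j) = (if i = j then 1 else 0))"
  unfolding R_def by (rule someI_ex[OF inv_exists[OF indepA]])

lemma AR: "i<d \<Longrightarrow> j<d \<Longrightarrow> (\<Sum>k<d. A i k * R k j) = (if i = j then 1 else 0)" using R by blast
lemma RA: "i<d \<Longrightarrow> j<d \<Longrightarrow> (\<Sum>k<d. R i k * A k j) = (if i = j then 1 else 0)" using R by blast

lemma c\<beta>_R: assumes y: "y \<in> K" and k: "k < d" shows "c\<beta> y k = (\<Sum>n<d. R k n * sg n y)"
proof -
  have "(\<Sum>n<d. R k n * sg n y) = (\<Sum>n<d. R k n * (\<Sum>i<d. c\<beta> y i * A n i))"
    using sg_expand[OF y] by simp
  also have "\<dots> = (\<Sum>i<d. c\<beta> y i * (\<Sum>n<d. R k n * A n i))" by (rule sum_swap_mult)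
  also have "\<dots> = (\<Sum>i<d. c\<beta> y i * (if k = i then 1 else 0))"
    by (rule sum.cong[OF refl]) (use RA k in auto)
  also have "\<dots> = c\<beta> y k" using k by (simp add: delta_sum')
  finally show ?thesis by simp
qed

end

context galsetup begin

lemma trace_formula: assumes x: "x \<in> K" shows "trace F K x = (\<Sum>m<d. sg m x)"
proof -
  define p where "p = (SOME (n, b). is_basis F K {..<n::nat} b)"
  have ex: "\<exists>p. case p of (n, b) \<Rightarrow> is_basis F K {..<n::nat} b"
    using basis' by (intro exI[of _ "(d,\<beta>)"]) simp
  have "case p of (n, b) \<Rightarrow> is_basis F K {..<n::nat} b" unfolding p_def using someI_ex[OF ex] .
  then obtain n b where pnb: "p = (n, b)" and bb: "is_basis F K {..<n} b" by (cases p) auto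
  define Mx where "Mx k i = coord F {..<n} b (x * b i) k" for k i
  have tr: "trace F K x = (\<Sum>i<n. Mx i i)"
    unfolding trace_def Mx_def using pnb p_def by simp
  have bK: "i < n \<Longrightarrow> b i \<in> K" for i using bb by (auto simp: is_basis_def)
  have cb: "(\<forall>k\<in>{..<n}. coord F {..<n} b y k \<in> F) \<and> y = (\<Sum>k<n. coord F {..<n} b y k * b k)"
    if y: "y \<in> K" for y
  proof -
    have "\<exists>c. (\<forall>i\<in>{..<n}. c i \<in> F) \<and> y = (\<Sum>i<n. c i * b i)" using bb y by (auto simp: is_basis_def)
    thus ?thesis unfolding coord_def by (rule someI_ex)
  qed
  have bind: "\<forall>c. (\<forall>i\<in>{..<n}. c i \<in> F) \<longrightarrow> (\<Sum>i<n. c i * b i) = 0 \<longrightarrow> (\<forall>i\<in>{..<n}. c i = 0)"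
    using bb by (simp add: is_basis_def)
  have \<beta>ind: "\<forall>c. (\<forall>i\<in>{..<d}. c i \<in> F) \<longrightarrow> (\<Sum>i<d. c i * \<beta> i) = 0 \<longrightarrow> (\<forall>i\<in>{..<d}. c i = 0)"
    using basis' by (simp add: is_basis_def)
  have xbK: "i < n \<Longrightarrow> x * b i \<in> K" for i using bK x subK by (auto intro: subf_mult)
  have MxF: "i < n \<Longrightarrow> k < n \<Longrightarrow> Mx k i \<in> F" for i k using cb[OF xbK] by (auto simp: Mx_def)
  have Mxe: "i < n \<Longrightarrow> x * b i = (\<Sum>k<n. Mx k i * b k)" for i using cb[OF xbK] by (auto simp: Mx_def)
  define P where "P j i = c\<beta> (b i) j" for j i
  define P' where "P' i j = coord F {..<n} b (\<beta> j) i" for i j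
  have PF: "i < n \<Longrightarrow> j < d \<Longrightarrow> P j i \<in> F" for i j using c\<beta>F bK by (simp add: P_def)
  have P'F: "i < n \<Longrightarrow> j < d \<Longrightarrow> P' i j \<in> F" for i j using cb[OF \<beta>K] by (simp add: P'_def)
  have Pe: "i < n \<Longrightarrow> b i = (\<Sum>j<d. P j i * \<beta> j)" for i using c\<beta>[OF bK] by (simp add: P_def)
  have P'e: "j < d \<Longrightarrow> \<beta> j = (\<Sum>i<n. P' i j * b i)" for j using cb[OF \<beta>K] by (simp add: P'_def)
  have P'P: "(\<Sum>j<d. P' i j * P j k) = (if i = k then 1 else 0)" if i: "i < n" and k: "k < n" for i k
  proof -
    define c where "c i = (\<Sum>j<d. P' i j * P j k) - (if i = k then 1 else 0)" for i
    have "(\<Sum>i<n. (\<Sum>j<d. P' i j * P j k) * b i) = (\<Sum>j<d. P j k * (\<Sum>i<n. P' i j * b i))"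
      by (simp add: sum_distrib_left sum_distrib_right mult.commute mult.left_commute sum.swap[of _ "{..<n}"])
    also have "\<dots> = (\<Sum>j<d. P j k * \<beta> j)" using P'e by simp
    also have "\<dots> = b k" using Pe k by simp
    finally have e: "(\<Sum>i<n. (\<Sum>j<d. P' i j * P j k) * b i) = b k" .
    have "(\<Sum>i<n. c i * b i) = (\<Sum>i<n. (\<Sum>j<d. P' i j * P j k) * b i) - (\<Sum>i<n. (if i = k then 1 else 0) * b i)"
      by (simp add: c_def algebra_simps sum_subtractf)
    also have "\<dots> = 0" using e k delta_sum_l[of k "{..<n}" b] by simp
    finally have "(\<Sum>i<n. c i * b i) = 0" .
    moreover have "\<forall>i\<in>{..<n}. c i \<in> F" unfolding c_def
      using PF P'F k subF by (auto intro!: subf_diff subf_sum subf_mult simp: subf_01)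
    ultimately have "c i = 0" using bind i by blast
    thus ?thesis by (simp add: c_def)
  qed
  have PP': "(\<Sum>i<n. P k i * P' i j) = (if k = j then 1 else 0)" if k: "k < d" and j: "j < d" for k j
  proof -
    define c where "c k = (\<Sum>i<n. P k i * P' i j) - (if k = j then 1 else 0)" for k
    have "(\<Sum>k<d. (\<Sum>i<n. P k i * P' i j) * \<beta> k) = (\<Sum>i<n. P' i j * (\<Sum>k<d. P k i * \<beta> k))"
      by (simp add: sum_distrib_left sum_distrib_right mult.commute mult.left_commute sum.swap[of _ "{..<d}"])
    also have "\<dots> = (\<Sum>i<n. P' i j * b i)" using Pe by simp
    also have "\<dots> = \<beta> j" using P'e j by simp
    finally have e: "(\<Sum>k<d. (\<Sum>i<n. P k i * P' i j) * \<beta> k) = \<beta> j" .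
    have "(\<Sum>k<d. c k * \<beta> k) = (\<Sum>k<d. (\<Sum>i<n. P k i * P' i j) * \<beta> k) - (\<Sum>k<d. (if k = j then 1 else 0) * \<beta> k)"
      by (simp add: c_def algebra_simps sum_subtractf)
    also have "\<dots> = 0" using e j delta_sum_l[of j "{..<d}" \<beta>] by simp
    finally have "(\<Sum>k<d. c k * \<beta> k) = 0" .
    moreover have "\<forall>k\<in>{..<d}. c k \<in> F" unfolding c_def
      using PF P'F j subF by (auto intro!: subf_diff subf_sum subf_mult simp: subf_01)
    ultimately have "c k = 0" using \<beta>ind k by blast
    thus ?thesis by (simp add: c_def)
  qed
  define S where "S i m = (\<Sum>j<d. P' i j * R j m)" for i m
  have sgb: "m < d \<Longrightarrow> i < n \<Longrightarrow> sg m (b i) = (\<Sum>l<d. P l i * A m l)" for m i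
    using sg_expand[OF bK] by (simp add: P_def)
  have SA: "(\<Sum>m<d. S i m * A m l) = P' i l" if l: "l < d" for i l
  proof -
    have "(\<Sum>m<d. S i m * A m l) = (\<Sum>m<d. A m l * (\<Sum>j<d. P' i j * R j m))" by (simp add: S_def mult.commute)
    also have "\<dots> = (\<Sum>j<d. P' i j * (\<Sum>m<d. A m l * R j m))" by (rule sum_swap_mult)
    also have "\<dots> = (\<Sum>j<d. P' i j * (if j = l then 1 else 0))"
      by (rule sum.cong[OF refl]) (use RA l in \<open>auto simp: mult.commute\<close>)
    also have "\<dots> = P' i l" using l by (simp add: delta_sum)
    finally show ?thesis .
  qed
  have L1: "(\<Sum>m<d. S i m * sg m (b k)) = (if i = k then 1 else 0)" if i: "i < n" and k: "k < n" for i k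
  proof -
    have "(\<Sum>m<d. S i m * sg m (b k)) = (\<Sum>m<d. S i m * (\<Sum>l<d. P l k * A m l))" using sgb k by simp
    also have "\<dots> = (\<Sum>l<d. P l k * (\<Sum>m<d. S i m * A m l))" by (rule sum_swap_mult)
    also have "\<dots> = (\<Sum>l<d. P' i l * P l k)" by (simp add: SA mult.commute)
    also have "\<dots> = (if i = k then 1 else 0)" using P'P i k by simp
    finally show ?thesis .
  qed
  have PS: "(\<Sum>i<n. P l i * S i m) = R l m" if l: "l < d" and m: "m < d" for l m
  proof -
    have "(\<Sum>i<n. P l i * S i m) = (\<Sum>i<n. P l i * (\<Sum>j<d. R j m * P' i j))" by (simp add: S_def mult.commute)
    also have "\<dots> = (\<Sum>j<d. R j m * (\<Sum>i<n. P l i * P' i j))" by (rule sum_swap_mult)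
    also have "\<dots> = (\<Sum>j<d. R j m * (if l = j then 1 else 0))"
      by (rule sum.cong[OF refl]) (use PP' l in auto)
    also have "\<dots> = R l m" using l by (simp add: delta_sum')
    finally show ?thesis .
  qed
  have L2: "(\<Sum>i<n. S i m * sg m (b i)) = 1" if m: "m < d" for m
  proof -
    have "(\<Sum>i<n. S i m * sg m (b i)) = (\<Sum>i<n. S i m * (\<Sum>l<d. P l i * A m l))" using sgb m by simp
    also have "\<dots> = (\<Sum>i<n. S i m * (\<Sum>l<d. A m l * P l i))" by (simp add: mult.commute)
    also have "\<dots> = (\<Sum>l<d. A m l * (\<Sum>i<n. S i m * P l i))" by (rule sum_swap_mult)
    also have "\<dots> = (\<Sum>l<d. A m l * R l m)" using PS m by (simp add: mult.commute)
    also have "\<dots> = 1" using AR m by simp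
    finally show ?thesis .
  qed
  have E1: "sg m x * sg m (b i) = (\<Sum>k<n. Mx k i * sg m (b k))" if m: "m < d" and i: "i < n" for m i
  proof -
    have "sg m x * sg m (b i) = sg m (x * b i)" using emb_mult[OF embs[OF m] x bK[OF i]] by simp
    also have "\<dots> = sg m (\<Sum>k<n. Mx k i * b k)" using Mxe i by simp
    also have "\<dots> = (\<Sum>k<n. sg m (Mx k i * b k))"
      by (rule emb_sum[OF embs[OF m] subK]) (use MxF i bK FK in \<open>auto intro!: subf_mult[OF subK]\<close>)
    also have "\<dots> = (\<Sum>k<n. Mx k i * sg m (b k))"
      by (rule sum.cong[OF refl]) (use emb_Fmult[OF embs[OF m] FK] MxF i bK in auto)
    finally show ?thesis .
  qed
  have "(\<Sum>m<d. sg m x) = (\<Sum>m<d. sg m x * (\<Sum>i<n. S i m * sg m (b i)))" using L2 by simp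
  also have "\<dots> = (\<Sum>m<d. \<Sum>i<n. S i m * (sg m x * sg m (b i)))"
    by (simp add: sum_distrib_left mult.left_commute)
  also have "\<dots> = (\<Sum>m<d. \<Sum>i<n. S i m * (\<Sum>k<n. Mx k i * sg m (b k)))"
    using E1 by simp
  also have "\<dots> = (\<Sum>i<n. \<Sum>m<d. S i m * (\<Sum>k<n. Mx k i * sg m (b k)))" by (rule sum.swap)
  also have "\<dots> = (\<Sum>i<n. \<Sum>k<n. Mx k i * (\<Sum>m<d. S i m * sg m (b k)))"
    by (rule sum.cong[OF refl], rule sum_swap_mult)
  also have "\<dots> = (\<Sum>i<n. \<Sum>k<n. Mx k i * (if i = k then 1 else 0))" using L1 by simp
  also have "\<dots> = (\<Sum>i<n. Mx i i)" by (simp add: delta_sum')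
  finally show ?thesis using tr by simp
qed

end

locale galsetup2 = galsetup F K d \<sigma> \<alpha> for F K :: "'a::field set" and d \<sigma> \<alpha> +
  fixes \<alpha>s :: "nat \<Rightarrow> 'a"
  assumes tr0: "\<forall>i\<in>{1..<d}. trace F K (\<alpha> i) = 0"
    and dual_in: "\<forall>j\<in>{1..<d}. \<alpha>s j \<in> K"
    and dual1: "\<forall>j\<in>{1..<d}. trace F K (\<alpha>s j) = 0"
    and dual: "\<forall>i\<in>{1..<d}. \<forall>j\<in>{1..<d}. trace F K (\<alpha> i * \<alpha>s j) = (if i = j then 1 else 0)"
begin

definition "\<gamma> j = (if j = 0 then inverse (of_nat d) else \<alpha>s j)"

lemma invdF: "inverse (of_nat d :: 'a) \<in> F" using subF by (simp add: subf_inv subf_of_nat)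

lemma \<gamma>K: "j < d \<Longrightarrow> \<gamma> j \<in> K"
  using dual_in invdF FK by (auto simp: \<gamma>_def)

lemma sg1: "m < d \<Longrightarrow> sg m 1 = 1" using embs by (auto simp: is_embedding_def)
lemma sgF: "m < d \<Longrightarrow> c \<in> F \<Longrightarrow> sg m c = c" using embs by (auto simp: is_embedding_def)

lemma A0: "m < d \<Longrightarrow> A m 0 = 1" by (simp add: A_def \<beta>_def sg1)

lemma trbg: assumes i: "i < d" and j: "j < d"
  shows "(\<Sum>m<d. A m i * sg m (\<gamma> j)) = (if i = j then 1 else 0)"
proof (cases "i = 0")
  case True
  show ?thesis
  proof (cases "j = 0")
    case True
    have "(\<Sum>m<d. A m i * sg m (\<gamma> j)) = (\<Sum>m<d. inverse (of_nat d :: 'a))"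
      using \<open>i = 0\<close> True A0 sgF invdF by (simp add: \<gamma>_def)
    also have "\<dots> = 1" using charD by simp
    finally show ?thesis using \<open>i = 0\<close> True by simp
  next
    case False
    have "(\<Sum>m<d. A m i * sg m (\<gamma> j)) = (\<Sum>m<d. sg m (\<alpha>s j))"
      using \<open>i = 0\<close> False A0 by (simp add: \<gamma>_def)
    also have "\<dots> = trace F K (\<alpha>s j)" using trace_formula dual_in j False by simp
    also have "\<dots> = 0" using dual1 j False by simp
    finally show ?thesis using \<open>i = 0\<close> False by simp
  qed
next
  case False
  have aK: "\<alpha> i \<in> K" using \<beta>K[OF i] False by (simp add: \<beta>_def)
  show ?thesis
  proof (cases "j = 0")
    case True
    have "(\<Sum>m<d. A m i * sg m (\<gamma> j)) = (\<Sum>m<d. sg m (\<alpha> i)) * inverse (of_nat d)"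
      using False True sgF invdF by (simp add: \<gamma>_def A_def \<beta>_def sum_distrib_right)
    also have "\<dots> = trace F K (\<alpha> i) * inverse (of_nat d)" using trace_formula aK by simp
    also have "\<dots> = 0" using tr0 i False by simp
    finally show ?thesis using False True by simp
  next
    case jF: False
    have sK: "\<alpha>s j \<in> K" using dual_in j jF by simp
    have "(\<Sum>m<d. A m i * sg m (\<gamma> j)) = (\<Sum>m<d. sg m (\<alpha> i * \<alpha>s j))"
      using False jF emb_mult[OF embs aK sK] by (simp add: \<gamma>_def A_def \<beta>_def)
    also have "\<dots> = trace F K (\<alpha> i * \<alpha>s j)" using trace_formula aK sK subK by (simp add: subf_mult)
    also have "\<dots> = (if i = j then 1 else 0)" using dual i j False jF by simp
    finally show ?thesis .
  qed
qed

lemma sg\<gamma>: assumes m: "m < d" and j: "j < d" shows "sg m (\<gamma> j) = R j m"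
proof -
  have "sg m (\<gamma> j) = (\<Sum>n<d. (if n = m then 1 else 0) * sg n (\<gamma> j))" using m by (simp add: delta_sum_l)
  also have "\<dots> = (\<Sum>n<d. (\<Sum>i<d. A n i * R i m) * sg n (\<gamma> j))" using AR m by simp
  also have "\<dots> = (\<Sum>n<d. sg n (\<gamma> j) * (\<Sum>i<d. R i m * A n i))" by (simp add: mult.commute)
  also have "\<dots> = (\<Sum>i<d. R i m * (\<Sum>n<d. sg n (\<gamma> j) * A n i))" by (rule sum_swap_mult)
  also have "\<dots> = (\<Sum>i<d. R i m * (if i = j then 1 else 0))"
    by (rule sum.cong[OF refl]) (use trbg j in \<open>auto simp: mult.commute\<close>)
  also have "\<dots> = R j m" using j by (simp add: delta_sum)
  finally show ?thesis .
qed

lemma Dform: assumes m: "m < d" and n: "n < d"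
  shows "(\<Sum>i\<in>{1..<d}. sg n (\<alpha>s i) * sg m (\<alpha> i)) = (if m = n then 1 else 0) - inverse (of_nat d)"
proof -
  have "(\<Sum>i<d. A m i * sg n (\<gamma> i)) = (\<Sum>i<d. A m i * R i n)" using sg\<gamma> n by simp
  also have "\<dots> = (if m = n then 1 else 0)" using AR m n by simp
  finally have e: "(\<Sum>i<d. A m i * sg n (\<gamma> i)) = (if m = n then 1 else 0)" .
  have split: "{..<d} = insert 0 {1..<d}" using d2 by auto
  have "(\<Sum>i<d. A m i * sg n (\<gamma> i)) = A m 0 * sg n (\<gamma> 0) + (\<Sum>i\<in>{1..<d}. A m i * sg n (\<gamma> i))"
    unfolding split by simp
  also have "A m 0 * sg n (\<gamma> 0) = inverse (of_nat d)" using A0 m sgF n invdF by (simp add: \<gamma>_def)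
  also have "(\<Sum>i\<in>{1..<d}. A m i * sg n (\<gamma> i)) = (\<Sum>i\<in>{1..<d}. sg n (\<alpha>s i) * sg m (\<alpha> i))"
    by (rule sum.cong[OF refl]) (auto simp: A_def \<beta>_def \<gamma>_def)
  finally show ?thesis using e by (simp add: algebra_simps)
qed

end

lemma mult_if_l: "(if P then 1 else 0) * (x::'a::comm_ring_1) = (if P then x else 0)" by simp
lemma mult_if_r: "(x::'a::comm_ring_1) * (if P then 1 else 0) = (if P then x else 0)" by simp

lemma qform_add: "qform n C (\<lambda>t. x t + y t) = qform n C x + qform n C y
   + (\<Sum>s\<in>{1..n}. \<Sum>t\<in>{1..n}. C s t * x s * y t) + (\<Sum>s\<in>{1..n}. \<Sum>t\<in>{1..n}. C s t * y s * x t)"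
  by (simp add: qform_def algebra_simps sum.distrib)

lemma sum_if_eq: assumes "finite S" "j \<in> S" shows "(\<Sum>t\<in>S. if t = j then f t else 0) = (f j :: 'a::comm_monoid_add)"
proof -
  have "sum (\<lambda>t. if t = j then f t else 0) (S - {j}) = 0" by (rule sum.neutral) auto
  thus ?thesis using sum.remove[OF assms, of "\<lambda>t. if t = j then f t else 0"] by simp
qed

lemma bil_e: fixes n :: nat assumes "i \<in> {1..n}" "j \<in> {1..n}"
  shows "(\<Sum>s\<in>{1..n}. \<Sum>t\<in>{1..n}. C s t * (if s = i then 1 else 0) * (if t = j then 1 else (0::'a::comm_ring_1))) = C i j"
proof -
  have "(\<Sum>t\<in>{1..n}. C s t * (if s = i then 1 else 0) * (if t = j then 1 else (0::'a))) = C s j * (if s = i then 1 else 0)" for s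
    by (rule delta_sum) (use assms in auto)
  hence "(\<Sum>s\<in>{1..n}. \<Sum>t\<in>{1..n}. C s t * (if s = i then 1 else 0) * (if t = j then 1 else (0::'a)))
     = (\<Sum>s\<in>{1..n}. C s j * (if s = i then 1 else 0))" by simp
  also have "\<dots> = C i j" by (rule delta_sum) (use assms in auto)
  finally show ?thesis .
qed

lemma qform_e: assumes "i \<in> {1..n}"
  shows "qform n C (\<lambda>t. if t = i then 1 else (0::'a::field)) = C i i"
  unfolding qform_def using bil_e[OF assms assms] by simp

lemma qform_ee: assumes "i \<in> {1..n}" "j \<in> {1..n}"
  shows "qform n C (\<lambda>t. (if t = i then 1 else 0) + (if t = j then 1 else (0::'a::field)))
     - qform n C (\<lambda>t. if t = i then 1 else 0) - qform n C (\<lambda>t. if t = j then 1 else 0) = C i j + C j i"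
  using qform_add[of n C "\<lambda>t. if t = i then 1 else 0" "\<lambda>t. if t = j then 1 else 0"] bil_e[OF assms, of C] bil_e[OF assms(2,1), of C]
  by simp

locale galsetup3 = galsetup2 +
  assumes d4: "d \<ge> 4"
begin

definition "u (\<tau>::nat\<Rightarrow>nat) i = \<sigma> 1 (\<alpha> i) - \<sigma> (\<tau> 3) (\<alpha> i)"
definition "v (\<tau>::nat\<Rightarrow>nat) j = \<sigma> 2 (\<alpha> j) - \<sigma> (\<tau> 4) (\<alpha> j)"
definition "T = {\<tau>. \<tau> permutes {3..d}}"
definition "c i j k = c\<beta> (\<alpha>s i * \<alpha>s j) k"

lemma finT: "finite T" unfolding T_def by (rule finite_permutations) simp

lemma \<tau>facts: assumes "\<tau> \<in> T" shows "\<tau> 3 \<in> {3..d}" "\<tau> 4 \<in> {3..d}" "\<tau> 3 \<noteq> \<tau> 4"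
proof -
  have p: "\<tau> permutes {3..d}" using assms by (simp add: T_def)
  show "\<tau> 3 \<in> {3..d}" "\<tau> 4 \<in> {3..d}" using permutes_in_image[OF p] d4 by auto
  show "\<tau> 3 \<noteq> \<tau> 4" using permutes_inj[OF p] by (metis inj_eq numeral_eq_iff semiring_norm(89) num.inject(2) numeral_3_eq_3 numeral_eq_Suc)
qed

lemma \<sigma>sg: "p \<in> {1..d} \<Longrightarrow> \<sigma> p = sg (p - 1)" by (simp add: sg_def)

lemma \<alpha>K: "i \<in> {1..<d} \<Longrightarrow> \<alpha> i \<in> K" using \<beta>K[of i] by (simp add: \<beta>_def)
lemma \<alpha>sK: "i \<in> {1..<d} \<Longrightarrow> \<alpha>s i \<in> K" using dual_in by simp

lemma prod0: assumes t: "\<tau> \<in> T" and n: "n < d"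
  shows "(\<Sum>i\<in>{1..<d}. sg n (\<alpha>s i) * u \<tau> i) * (\<Sum>j\<in>{1..<d}. sg n (\<alpha>s j) * v \<tau> j) = 0"
proof -
  define p where "p = \<tau> 3 - 1"
  define q where "q = \<tau> 4 - 1"
  have pq: "p < d" "q < d" "p \<ge> 2" "q \<ge> 2" "p \<noteq> q" using \<tau>facts[OF t] by (auto simp: p_def q_def)
  have u': "u \<tau> i = sg 0 (\<alpha> i) - sg p (\<alpha> i)" for i
    using \<tau>facts[OF t] by (simp add: u_def p_def sg_def)
  have v': "v \<tau> i = sg 1 (\<alpha> i) - sg q (\<alpha> i)" for i
    using \<tau>facts[OF t] by (simp add: v_def q_def sg_def numeral_2_eq_2)
  have "(\<Sum>i\<in>{1..<d}. sg n (\<alpha>s i) * u \<tau> i) = (\<Sum>i\<in>{1..<d}. sg n (\<alpha>s i) * sg 0 (\<alpha> i)) - (\<Sum>i\<in>{1..<d}. sg n (\<alpha>s i) * sg p (\<alpha> i))"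
    by (simp add: u' algebra_simps sum_subtractf)
  also have "\<dots> = (if 0 = n then 1 else 0) - (if p = n then 1 else 0)"
    using Dform[of 0 n] Dform[of p n] n pq d2 by simp
  finally have e1: "(\<Sum>i\<in>{1..<d}. sg n (\<alpha>s i) * u \<tau> i) = (if 0 = n then 1 else 0) - (if p = n then 1 else 0)" .
  have "(\<Sum>i\<in>{1..<d}. sg n (\<alpha>s i) * v \<tau> i) = (\<Sum>i\<in>{1..<d}. sg n (\<alpha>s i) * sg 1 (\<alpha> i)) - (\<Sum>i\<in>{1..<d}. sg n (\<alpha>s i) * sg q (\<alpha> i))"
    by (simp add: v' algebra_simps sum_subtractf)
  also have "\<dots> = (if 1 = n then 1 else 0) - (if q = n then 1 else 0)"
    using Dform[of 1 n] Dform[of q n] n pq d2 by simp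
  finally have e2: "(\<Sum>i\<in>{1..<d}. sg n (\<alpha>s i) * v \<tau> i) = (if 1 = n then 1 else 0) - (if q = n then 1 else 0)" .
  show ?thesis unfolding e1 e2 using pq by auto
qed

lemma cF: "i \<in> {1..<d} \<Longrightarrow> j \<in> {1..<d} \<Longrightarrow> k < d \<Longrightarrow> c i j k \<in> F"
  unfolding c_def using \<alpha>sK subK by (auto intro!: c\<beta>F subf_mult)

lemma c_sym: "c i j k = c j i k" by (simp add: c_def mult.commute)

lemma c_R: assumes "i \<in> {1..<d}" "j \<in> {1..<d}" "k < d"
  shows "c i j k = (\<Sum>n<d. R k n * (sg n (\<alpha>s i) * sg n (\<alpha>s j)))"
proof -
  have "\<alpha>s i * \<alpha>s j \<in> K" using assms \<alpha>sK subK by (auto intro: subf_mult)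
  hence "c i j k = (\<Sum>n<d. R k n * sg n (\<alpha>s i * \<alpha>s j))" using c\<beta>_R assms by (simp add: c_def)
  also have "\<dots> = (\<Sum>n<d. R k n * (sg n (\<alpha>s i) * sg n (\<alpha>s j)))"
    by (rule sum.cong[OF refl]) (use emb_mult[OF embs] \<alpha>sK assms in auto)
  finally show ?thesis .
qed

lemma Bvanish: assumes k: "k < d"
  shows "(\<Sum>i\<in>{1..<d}. \<Sum>j\<in>{1..<d}. c i j k * (\<Sum>\<tau>\<in>T. u \<tau> i * v \<tau> j)) = 0"
proof -
  define a where "a n i = sg n (\<alpha>s i)" for n i
  define I where "I = {1..<d}"
  define G where "G i j n \<tau> = R k n * (a n i * u \<tau> i) * (a n j * v \<tau> j)" for i j n \<tau>
  have "(\<Sum>i\<in>I. \<Sum>j\<in>I. c i j k * (\<Sum>\<tau>\<in>T. u \<tau> i * v \<tau> j)) = (\<Sum>i\<in>I. \<Sum>j\<in>I. \<Sum>n<d. \<Sum>\<tau>\<in>T. G i j n \<tau>)"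
  proof (intro sum.cong refl)
    fix i j assume "i \<in> I" "j \<in> I"
    hence ce: "c i j k = (\<Sum>n<d. R k n * (a n i * a n j))" using c_R k by (simp add: I_def a_def)
    have "c i j k * (\<Sum>\<tau>\<in>T. u \<tau> i * v \<tau> j) = (\<Sum>n<d. R k n * (a n i * a n j)) * (\<Sum>\<tau>\<in>T. u \<tau> i * v \<tau> j)"
      by (simp only: ce)
    also have "\<dots> = (\<Sum>n<d. \<Sum>\<tau>\<in>T. (R k n * (a n i * a n j)) * (u \<tau> i * v \<tau> j))" by (rule sum_product)
    also have "\<dots> = (\<Sum>n<d. \<Sum>\<tau>\<in>T. G i j n \<tau>)" by (simp add: G_def mult_ac)
    finally show "c i j k * (\<Sum>\<tau>\<in>T. u \<tau> i * v \<tau> j) = (\<Sum>n<d. \<Sum>\<tau>\<in>T. G i j n \<tau>)" .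
  qed
  also have "\<dots> = (\<Sum>j\<in>I. \<Sum>n<d. \<Sum>i\<in>I. \<Sum>\<tau>\<in>T. G i j n \<tau>)" by (rule sum_swap3)
  also have "\<dots> = (\<Sum>n<d. \<Sum>i\<in>I. \<Sum>j\<in>I. \<Sum>\<tau>\<in>T. G i j n \<tau>)" by (rule sum_swap3)
  also have "\<dots> = (\<Sum>n<d. \<Sum>\<tau>\<in>T. \<Sum>i\<in>I. \<Sum>j\<in>I. G i j n \<tau>)"
    by (rule sum.cong[OF refl], rule sum_swap3[symmetric])
  also have "\<dots> = (\<Sum>n<d. \<Sum>\<tau>\<in>T. R k n * ((\<Sum>i\<in>I. a n i * u \<tau> i) * (\<Sum>j\<in>I. a n j * v \<tau> j)))"
  proof -
    have "(\<Sum>i\<in>I. \<Sum>j\<in>I. G i j n \<tau>) = R k n * ((\<Sum>i\<in>I. a n i * u \<tau> i) * (\<Sum>j\<in>I. a n j * v \<tau> j))" for n \<tau>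
    proof -
      have "R k n * ((\<Sum>i\<in>I. a n i * u \<tau> i) * (\<Sum>j\<in>I. a n j * v \<tau> j))
          = R k n * (\<Sum>i\<in>I. \<Sum>j\<in>I. (a n i * u \<tau> i) * (a n j * v \<tau> j))" by (simp only: sum_product)
      also have "\<dots> = (\<Sum>i\<in>I. \<Sum>j\<in>I. R k n * ((a n i * u \<tau> i) * (a n j * v \<tau> j)))" by (simp only: sum_distrib_left)
      also have "\<dots> = (\<Sum>i\<in>I. \<Sum>j\<in>I. G i j n \<tau>)" by (simp add: G_def mult.assoc)
      finally show ?thesis by simp
    qed
    thus ?thesis by (simp only:)
  qed
  also have "\<dots> = 0"
  proof (intro sum.neutral ballI)
    fix n \<tau> assume "n \<in> {..<d}" "\<tau> \<in> T"
    hence "(\<Sum>i\<in>I. a n i * u \<tau> i) * (\<Sum>j\<in>I. a n j * v \<tau> j) = 0"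
      unfolding a_def I_def using prod0 by blast
    thus "R k n * ((\<Sum>i\<in>I. a n i * u \<tau> i) * (\<Sum>j\<in>I. a n j * v \<tau> j)) = 0" by simp
  qed
  finally show ?thesis by (simp add: I_def)
qed

end

locale galsetup4 = galsetup3 +
  assumes two: "(2::'a) \<noteq> 0"
begin

lemma qmap_pol: assumes i: "i \<in> {1..<d}" and j: "j \<in> {1..<d}"
  shows "qmap \<sigma> d (\<alpha> i + \<alpha> j) - qmap \<sigma> d (\<alpha> i) - qmap \<sigma> d (\<alpha> j)
       = (\<Sum>\<tau>\<in>T. u \<tau> i * v \<tau> j + u \<tau> j * v \<tau> i)"
proof -
  have add: "\<sigma> p (\<alpha> i + \<alpha> j) = \<sigma> p (\<alpha> i) + \<sigma> p (\<alpha> j)" if "p \<in> {1..d}" for p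
    using emb that \<alpha>K[OF i] \<alpha>K[OF j] emb_add by blast
  have e: "(\<sigma> 1 (\<alpha> i + \<alpha> j) - \<sigma> (\<tau> 3) (\<alpha> i + \<alpha> j)) * (\<sigma> 2 (\<alpha> i + \<alpha> j) - \<sigma> (\<tau> 4) (\<alpha> i + \<alpha> j))
      - (\<sigma> 1 (\<alpha> i) - \<sigma> (\<tau> 3) (\<alpha> i)) * (\<sigma> 2 (\<alpha> i) - \<sigma> (\<tau> 4) (\<alpha> i))
      - (\<sigma> 1 (\<alpha> j) - \<sigma> (\<tau> 3) (\<alpha> j)) * (\<sigma> 2 (\<alpha> j) - \<sigma> (\<tau> 4) (\<alpha> j))
      = u \<tau> i * v \<tau> j + u \<tau> j * v \<tau> i" if t: "\<tau> \<in> T" for \<tau>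
  proof -
    have "1 \<in> {1..d}" "2 \<in> {1..d}" "\<tau> 3 \<in> {1..d}" "\<tau> 4 \<in> {1..d}" using \<tau>facts[OF t] d4 by auto
    hence a: "\<sigma> 1 (\<alpha> i + \<alpha> j) = \<sigma> 1 (\<alpha> i) + \<sigma> 1 (\<alpha> j)" "\<sigma> 2 (\<alpha> i + \<alpha> j) = \<sigma> 2 (\<alpha> i) + \<sigma> 2 (\<alpha> j)"
      "\<sigma> (\<tau> 3) (\<alpha> i + \<alpha> j) = \<sigma> (\<tau> 3) (\<alpha> i) + \<sigma> (\<tau> 3) (\<alpha> j)"
      "\<sigma> (\<tau> 4) (\<alpha> i + \<alpha> j) = \<sigma> (\<tau> 4) (\<alpha> i) + \<sigma> (\<tau> 4) (\<alpha> j)" using add by blast+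
    show ?thesis unfolding a u_def v_def by (simp add: algebra_simps)
  qed
  have "qmap \<sigma> d (\<alpha> i + \<alpha> j) - qmap \<sigma> d (\<alpha> i) - qmap \<sigma> d (\<alpha> j)
      = (\<Sum>\<tau>\<in>T. (\<sigma> 1 (\<alpha> i + \<alpha> j) - \<sigma> (\<tau> 3) (\<alpha> i + \<alpha> j)) * (\<sigma> 2 (\<alpha> i + \<alpha> j) - \<sigma> (\<tau> 4) (\<alpha> i + \<alpha> j))
      - (\<sigma> 1 (\<alpha> i) - \<sigma> (\<tau> 3) (\<alpha> i)) * (\<sigma> 2 (\<alpha> i) - \<sigma> (\<tau> 4) (\<alpha> i))
      - (\<sigma> 1 (\<alpha> j) - \<sigma> (\<tau> 3) (\<alpha> j)) * (\<sigma> 2 (\<alpha> j) - \<sigma> (\<tau> 4) (\<alpha> j)))"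
    unfolding qmap_def T_def by (simp add: sum_subtractf)
  also have "\<dots> = (\<Sum>\<tau>\<in>T. u \<tau> i * v \<tau> j + u \<tau> j * v \<tau> i)" by (rule sum.cong[OF refl]) (rule e)
  finally show ?thesis .
qed

lemma I_eq: "{1..d - 1} = {1..<d}" using d2 by auto

lemma final_vanish:
  fixes Q :: "nat \<Rightarrow> nat \<Rightarrow> nat \<Rightarrow> 'a" and \<omega> :: "nat \<Rightarrow> 'a" and L :: "nat set"
  assumes finL: "finite L"
    and QF: "\<forall>l i j. Q l i j \<in> F"
    and Qdef: "\<forall>a. (\<forall>j. a j \<in> F) \<longrightarrow>
        qmap \<sigma> d (\<Sum>j\<in>{1..<d}. a j * \<alpha> j) = (\<Sum>l\<in>L. qform (d - 1) (Q l) a * \<omega> l)"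
    and oind: "\<forall>c. (\<forall>i\<in>L. c i \<in> F) \<longrightarrow> (\<Sum>i\<in>L. c i * \<omega> i) = 0 \<longrightarrow> (\<forall>i\<in>L. c i = 0)"
    and l: "l \<in> L"
  shows "qform (d - 1) (Q l) \<alpha>s = 0"
proof -
  define I where "I = {1..<d}"
  define e where "e i = (\<lambda>t. if t = i then 1 else (0::'a))" for i :: nat
  have eF: "e i t \<in> F" for i t using subF by (simp add: e_def subf_01)
  have eeF: "e i t + e j t \<in> F" for i j t using eF subF by (simp add: subf_add)
  have se: "(\<Sum>t\<in>I. e i t * \<alpha> t) = \<alpha> i" if "i \<in> I" for i
    unfolding e_def using that by (simp add: I_def delta_sum_l)
  have see: "(\<Sum>t\<in>I. (e i t + e j t) * \<alpha> t) = \<alpha> i + \<alpha> j" if "i \<in> I" "j \<in> I" for i j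
    using se[OF that(1)] se[OF that(2)] by (simp add: distrib_right sum.distrib)
  have pol: "(\<Sum>l\<in>L. (Q l i j + Q l j i) * \<omega> l) = (\<Sum>\<tau>\<in>T. u \<tau> i * v \<tau> j + u \<tau> j * v \<tau> i)"
    if i: "i \<in> I" and j: "j \<in> I" for i j
  proof -
    have q1: "qmap \<sigma> d (\<alpha> i + \<alpha> j) = (\<Sum>l\<in>L. qform (d - 1) (Q l) (\<lambda>t. e i t + e j t) * \<omega> l)"
      using Qdef[rule_format, of "\<lambda>t. e i t + e j t"] eeF see[OF i j] by (simp add: I_def)
    have q2: "qmap \<sigma> d (\<alpha> i) = (\<Sum>l\<in>L. qform (d - 1) (Q l) (e i) * \<omega> l)"
      using Qdef[rule_format, of "e i"] eF se[OF i] by (simp add: I_def)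
    have q3: "qmap \<sigma> d (\<alpha> j) = (\<Sum>l\<in>L. qform (d - 1) (Q l) (e j) * \<omega> l)"
      using Qdef[rule_format, of "e j"] eF se[OF j] by (simp add: I_def)
    have i': "i \<in> {1..d-1}" and j': "j \<in> {1..d-1}" using i j I_eq by (auto simp: I_def)
    have "(\<Sum>\<tau>\<in>T. u \<tau> i * v \<tau> j + u \<tau> j * v \<tau> i) = qmap \<sigma> d (\<alpha> i + \<alpha> j) - qmap \<sigma> d (\<alpha> i) - qmap \<sigma> d (\<alpha> j)"
      using qmap_pol i j by (simp add: I_def)
    also have "\<dots> = (\<Sum>l\<in>L. (qform (d - 1) (Q l) (\<lambda>t. e i t + e j t) - qform (d - 1) (Q l) (e i) - qform (d - 1) (Q l) (e j)) * \<omega> l)"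
      unfolding q1 q2 q3 by (simp add: sum_subtractf left_diff_distrib)
    also have "\<dots> = (\<Sum>l\<in>L. (Q l i j + Q l j i) * \<omega> l)"
      unfolding e_def by (intro sum.cong refl arg_cong2[where f="(*)"] qform_ee[OF i' j'])
    finally show ?thesis by simp
  qed
  have cQ0: "(\<Sum>i\<in>I. \<Sum>j\<in>I. c i j k * (Q l' i j + Q l' j i)) = 0" if k: "k < d" and l': "l' \<in> L" for k l'
  proof -
    define W where "W i j = (\<Sum>\<tau>\<in>T. u \<tau> i * v \<tau> j)" for i j
    have "(\<Sum>l\<in>L. (\<Sum>i\<in>I. \<Sum>j\<in>I. c i j k * (Q l i j + Q l j i)) * \<omega> l)
        = (\<Sum>l\<in>L. \<Sum>i\<in>I. \<Sum>j\<in>I. c i j k * ((Q l i j + Q l j i) * \<omega> l))"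
      by (simp add: sum_distrib_right mult.assoc)
    also have "\<dots> = (\<Sum>i\<in>I. \<Sum>j\<in>I. \<Sum>l\<in>L. c i j k * ((Q l i j + Q l j i) * \<omega> l))" by (rule sum_swap3)
    also have "\<dots> = (\<Sum>i\<in>I. \<Sum>j\<in>I. c i j k * (\<Sum>\<tau>\<in>T. u \<tau> i * v \<tau> j + u \<tau> j * v \<tau> i))"
      by (intro sum.cong refl) (simp add: sum_distrib_left[symmetric] pol)
    also have "\<dots> = (\<Sum>i\<in>I. \<Sum>j\<in>I. c i j k * W i j) + (\<Sum>i\<in>I. \<Sum>j\<in>I. c i j k * W j i)"
      by (simp add: W_def sum.distrib distrib_left)
    also have "(\<Sum>i\<in>I. \<Sum>j\<in>I. c i j k * W j i) = (\<Sum>j\<in>I. \<Sum>i\<in>I. c i j k * W j i)" by (rule sum.swap)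
    also have "\<dots> = (\<Sum>j\<in>I. \<Sum>i\<in>I. c j i k * W j i)" by (intro sum.cong refl) (subst c_sym, rule refl)
    also have "(\<Sum>i\<in>I. \<Sum>j\<in>I. c i j k * W i j) = 0" using Bvanish[OF k] by (simp add: W_def I_def)
    finally have z: "(\<Sum>l\<in>L. (\<Sum>i\<in>I. \<Sum>j\<in>I. c i j k * (Q l i j + Q l j i)) * \<omega> l) = 0"
      using Bvanish[OF k] by (simp add: W_def I_def)
    have "\<forall>l\<in>L. (\<Sum>i\<in>I. \<Sum>j\<in>I. c i j k * (Q l i j + Q l j i)) \<in> F"
      using cF k QF subF by (auto simp: I_def intro!: subf_sum subf_mult subf_add)
    thus ?thesis using oind[rule_format, of "\<lambda>l. (\<Sum>i\<in>I. \<Sum>j\<in>I. c i j k * (Q l i j + Q l j i))"] z l' by simp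
  qed
  have S0: "(\<Sum>i\<in>I. \<Sum>j\<in>I. c i j k * Q l i j) = 0" if k: "k < d" for k
  proof -
    have "(\<Sum>i\<in>I. \<Sum>j\<in>I. c i j k * Q l j i) = (\<Sum>j\<in>I. \<Sum>i\<in>I. c i j k * Q l j i)" by (rule sum.swap)
    also have "\<dots> = (\<Sum>j\<in>I. \<Sum>i\<in>I. c j i k * Q l j i)" by (intro sum.cong refl) (subst c_sym, rule refl)
    finally have sw: "(\<Sum>i\<in>I. \<Sum>j\<in>I. c i j k * Q l j i) = (\<Sum>i\<in>I. \<Sum>j\<in>I. c i j k * Q l i j)" .
    have "0 = (\<Sum>i\<in>I. \<Sum>j\<in>I. c i j k * (Q l i j + Q l j i))" using cQ0[OF k l] by simp
    also have "\<dots> = (\<Sum>i\<in>I. \<Sum>j\<in>I. c i j k * Q l i j) + (\<Sum>i\<in>I. \<Sum>j\<in>I. c i j k * Q l j i)"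
      by (simp add: distrib_left sum.distrib)
    also have "\<dots> = 2 * (\<Sum>i\<in>I. \<Sum>j\<in>I. c i j k * Q l i j)" using sw by simp
    finally show ?thesis using two by simp
  qed
  have "qform (d - 1) (Q l) \<alpha>s = (\<Sum>i\<in>I. \<Sum>j\<in>I. Q l i j * \<alpha>s i * \<alpha>s j)"
    unfolding qform_def I_eq I_def ..
  also have "\<dots> = (\<Sum>i\<in>I. \<Sum>j\<in>I. \<Sum>k<d. (c i j k * Q l i j) * \<beta> k)"
  proof (intro sum.cong refl)
    fix i j assume "i \<in> I" "j \<in> I"
    hence "\<alpha>s i * \<alpha>s j \<in> K" using \<alpha>sK subK by (auto simp: I_def intro: subf_mult)
    hence "\<alpha>s i * \<alpha>s j = (\<Sum>k<d. c i j k * \<beta> k)" using c\<beta> by (simp add: c_def)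
    hence "Q l i j * \<alpha>s i * \<alpha>s j = Q l i j * (\<Sum>k<d. c i j k * \<beta> k)" by (simp add: mult.assoc)
    thus "Q l i j * \<alpha>s i * \<alpha>s j = (\<Sum>k<d. (c i j k * Q l i j) * \<beta> k)"
      by (simp add: sum_distrib_left mult_ac)
  qed
  also have "\<dots> = (\<Sum>k<d. \<Sum>i\<in>I. \<Sum>j\<in>I. (c i j k * Q l i j) * \<beta> k)" by (rule sum_swap3[symmetric])
  also have "\<dots> = (\<Sum>k<d. (\<Sum>i\<in>I. \<Sum>j\<in>I. c i j k * Q l i j) * \<beta> k)" by (simp add: sum_distrib_right)
  also have "\<dots> = 0" using S0 by simp
  finally show ?thesis .
qed

lemma qform_sigma: assumes m: "m \<in> {1..d}" and CF: "\<forall>i j. C i j \<in> F"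
  shows "\<sigma> m (qform (d - 1) C \<alpha>s) = qform (d - 1) C (\<lambda>i. \<sigma> m (\<alpha>s i))"
proof -
  have E: "is_embedding F K (\<sigma> m)" using emb m by blast
  have sK: "i \<in> {1..d-1} \<Longrightarrow> \<alpha>s i \<in> K" for i using \<alpha>sK I_eq by auto
  have tK: "i \<in> {1..d-1} \<Longrightarrow> j \<in> {1..d-1} \<Longrightarrow> C i j * \<alpha>s i * \<alpha>s j \<in> K" for i j
    using sK CF FK subK by (auto intro!: subf_mult)
  have "\<sigma> m (qform (d - 1) C \<alpha>s) = (\<Sum>i\<in>{1..d-1}. \<sigma> m (\<Sum>j\<in>{1..d-1}. C i j * \<alpha>s i * \<alpha>s j))"
    unfolding qform_def by (rule emb_sum[OF E subK]) (use tK in \<open>auto intro!: subf_sum[OF subK]\<close>)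
  also have "\<dots> = (\<Sum>i\<in>{1..d-1}. \<Sum>j\<in>{1..d-1}. \<sigma> m (C i j * \<alpha>s i * \<alpha>s j))"
    by (intro sum.cong refl emb_sum[OF E subK]) (use tK in auto)
  also have "\<dots> = qform (d - 1) C (\<lambda>i. \<sigma> m (\<alpha>s i))"
    unfolding qform_def
  proof (intro sum.cong refl)
    fix i j assume i: "i \<in> {1..d-1}" and j: "j \<in> {1..d-1}"
    have "C i j * \<alpha>s i \<in> K" using sK[OF i] CF FK subK by (auto intro!: subf_mult)
    hence "\<sigma> m (C i j * \<alpha>s i * \<alpha>s j) = \<sigma> m (C i j * \<alpha>s i) * \<sigma> m (\<alpha>s j)" using emb_mult[OF E _ sK[OF j]] by blast
    also have "\<sigma> m (C i j * \<alpha>s i) = C i j * \<sigma> m (\<alpha>s i)" using emb_Fmult[OF E FK] CF sK[OF i] by blast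
    finally show "\<sigma> m (C i j * \<alpha>s i * \<alpha>s j) = C i j * \<sigma> m (\<alpha>s i) * \<sigma> m (\<alpha>s j)" .
  qed
  finally show ?thesis .
qed

lemma nonzero: assumes m: "m \<in> {1..d}" shows "\<exists>i\<in>{1..<d}. \<sigma> m (\<alpha>s i) \<noteq> 0"
proof (rule ccontr)
  assume "\<not> ?thesis"
  hence z: "\<sigma> m (\<alpha>s 1) = 0" using d2 by auto
  have E: "is_embedding F K (\<sigma> m)" using emb m by blast
  have s1: "\<alpha>s 1 \<in> K" using \<alpha>sK d2 by auto
  have "\<sigma> m (\<alpha>s 1) = \<sigma> m 0" using z emb_0[OF E subK] by simp
  hence "\<alpha>s 1 = 0" using E s1 subf_01(1)[OF subK] by (auto simp: is_embedding_def inj_on_def)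
  hence "trace F K (\<alpha> 1 * \<alpha>s 1) = trace F K 0" by simp
  also have "\<dots> = 0" using trace_formula[OF subf_01(1)[OF subK]] emb_0[OF embs subK] by simp
  finally show False using dual d2 by auto
qed

end

theorem mainTheorem17:
  fixes F K :: "'a::field set"
    and d :: nat
    and \<sigma> :: "nat \<Rightarrow> 'a \<Rightarrow> 'a"
    and \<alpha> \<alpha>s :: "nat \<Rightarrow> 'a"
    and \<omega> :: "nat \<Rightarrow> 'a"
    and Q :: "nat \<Rightarrow> nat \<Rightarrow> nat \<Rightarrow> 'a"
  assumes d4: "d \<ge> 4"
    and char: "\<forall>n::nat. 0 < n \<and> n \<le> d \<longrightarrow> (of_nat n :: 'a) \<noteq> 0"
    and subF: "is_subfield F" and subK: "is_subfield K" and FK: "F \<subseteq> K"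
    and basis: "is_basis F K {0..<d} (\<lambda>i. if i = 0 then 1 else \<alpha> i)"
    and tr0: "\<forall>i\<in>{1..<d}. trace F K (\<alpha> i) = 0"
    and dual_in: "\<forall>j\<in>{1..<d}. \<alpha>s j \<in> K"
    and dual1: "\<forall>j\<in>{1..<d}. trace F K (\<alpha>s j) = 0"
    and dual: "\<forall>i\<in>{1..<d}. \<forall>j\<in>{1..<d}. trace F K (\<alpha> i * \<alpha>s j) = (if i = j then 1 else 0)"
    and emb: "\<forall>m\<in>{1..d}. is_embedding F K (\<sigma> m)"
    and emb1: "\<forall>x\<in>K. \<sigma> 1 x = x"
    and emb_dist: "\<forall>m\<in>{1..d}. \<forall>m'\<in>{1..d}. m \<noteq> m' \<longrightarrow> (\<exists>x\<in>K. \<sigma> m x \<noteq> \<sigma> m' x)"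
    and emb_all: "\<forall>s. is_embedding F K s \<longrightarrow> (\<exists>m\<in>{1..d}. \<forall>x\<in>K. s x = \<sigma> m x)"
    and closure: "gen_field (F \<union> (\<Union>m\<in>{1..d}. \<sigma> m ` K)) = UNIV"
    and gal_Sd: "\<forall>\<pi>. \<pi> permutes {1..d} \<longrightarrow> (\<exists>g. gal_auto F g \<and> gal_perm K \<sigma> d g \<pi>)"
    and omega: "is_basis F (V2 F K \<sigma> d) {1..d * (d - 3) div 2} \<omega>"
    and QF: "\<forall>l i j. Q l i j \<in> F"
    and Qdef: "\<forall>a. (\<forall>j. a j \<in> F) \<longrightarrow>
        qmap \<sigma> d (\<Sum>j\<in>{1..<d}. a j * \<alpha> j)
          = (\<Sum>l\<in>{1..d * (d - 3) div 2}. qform (d - 1) (Q l) a * \<omega> l)"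
  shows "\<forall>l\<in>{1..d * (d - 3) div 2}.
           qform (d - 1) (Q l) \<alpha>s = 0
         \<and> (\<forall>m\<in>{1..d}. (\<exists>i\<in>{1..<d}. \<sigma> m (\<alpha>s i) \<noteq> 0)
                       \<and> qform (d - 1) (Q l) (\<lambda>i. \<sigma> m (\<alpha>s i)) = 0)"
proof -
  have d2: "d \<ge> 2" using d4 by simp
  have charD: "(of_nat d :: 'a) \<noteq> 0" using char d4 by simp
  have two: "(2::'a) \<noteq> 0" using char[rule_format, of 2] d4 by simp
  interpret G: galsetup4 F K d \<sigma> \<alpha> \<alpha>s
    using d2 charD subF subK FK basis emb emb_dist tr0 dual_in dual1 dual d4 two
    by (simp add: galsetup4_def galsetup3_def galsetup2_def galsetup_def galsetup4_axioms_def
        galsetup3_axioms_def galsetup2_axioms_def)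
  have finL: "finite {1..d * (d - 3) div 2}" by simp
  have oind: "\<forall>c. (\<forall>i\<in>{1..d * (d - 3) div 2}. c i \<in> F) \<longrightarrow> (\<Sum>i\<in>{1..d * (d - 3) div 2}. c i * \<omega> i) = 0
       \<longrightarrow> (\<forall>i\<in>{1..d * (d - 3) div 2}. c i = 0)"
    using omega by (simp add: is_basis_def)
  show ?thesis
  proof (rule ballI)
    fix l assume l: "l \<in> {1..d * (d - 3) div 2}"
    have z: "qform (d - 1) (Q l) \<alpha>s = 0" using G.final_vanish[OF finL QF Qdef oind l] .
    show "qform (d - 1) (Q l) \<alpha>s = 0 \<and> (\<forall>m\<in>{1..d}. (\<exists>i\<in>{1..<d}. \<sigma> m (\<alpha>s i) \<noteq> 0)
                       \<and> qform (d - 1) (Q l) (\<lambda>i. \<sigma> m (\<alpha>s i)) = 0)"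
    proof (intro conjI ballI)
      show "qform (d - 1) (Q l) \<alpha>s = 0" by (rule z)
    next
      fix m assume m: "m \<in> {1..d}"
      show "\<exists>i\<in>{1..<d}. \<sigma> m (\<alpha>s i) \<noteq> 0" by (rule G.nonzero[OF m])
    next
      fix m assume m: "m \<in> {1..d}"
      have QF': "\<forall>i j. Q l i j \<in> F" using QF by blast
      have "qform (d - 1) (Q l) (\<lambda>i. \<sigma> m (\<alpha>s i)) = \<sigma> m (qform (d - 1) (Q l) \<alpha>s)"
        using G.qform_sigma[OF m QF'] by simp
      also have "\<dots> = 0" using z emb_0[of F K "\<sigma> m"] emb m subK by simp
      finally show "qform (d - 1) (Q l) (\<lambda>i. \<sigma> m (\<alpha>s i)) = 0" .
    qed
  qed
qed

end
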